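(* Let $a>0$, $D>0$, $g>0$, $l_{\mathrm{c}}>0$, $c_{\infty}>0$ and $c_{\mathrm{s}}\ge 0$ be constants. A steady-state solution is a pair $(l_{\infty},c)$ with $l_{\infty}>0$ and $c\in C^2([0,l_{\infty}])$ satisfying \[ D c''(x)-a c'(x)-g c(x)=0\ (0<x<l_{\infty}),\qquad D c'(l_{\infty})=(a-gl_{\mathrm{c}})c_{\infty},\qquad c(l_{\infty})=c_{\infty},\qquad c(0)=c_{\mathrm{s}}. \] Set $R=\sqrt{a^2+4gD}$, $\lambda_{\pm}=(a\pm R)/(2D)$, \[ f(z)=\frac{1}{R}\left[\mathrm{e}^{-\lambda_+ z}\left(\frac{R+a}{2}-gl_{\mathrm{c}}\right)+\mathrm{e}^{-\lambda_- z}\left(\frac{R-a}{2}+gl_{\mathrm{c}}\right)\right], \] and, for a given $l_{\infty}>0$, \[ c(x)=\frac{c_{\infty}}{R}\left[\left(\frac{R+a}{2}-gl_{\mathrm{c}}\right)\mathrm{e}^{\lambda_+(x-l_{\infty})}+\left(\frac{R-a}{2}+gl_{\mathrm{c}}\right)\mathrm{e}^{\lambda_-(x-l_{\infty})}\right],\quad 0\le x\le l_{\infty}.\qquad(\ast) \] Then: (I) If $gl_{\mathrm{c}}<a$, then \[ z_0=\frac{D}{R}\log\frac{(R+a)(R+a-2gl_{\mathrm{c}})}{(R-a)(R-a+2gl_{\mathrm{c}})} \] satisfies $z_0>0$, and (i) if $c_{\mathrm{s}}/c_{\infty}<f(z_0)<1$, no steady-state solution exists; (ii) if $c_{\mathrm{s}}/c_{\infty}=f(z_0)$,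 there is a unique steady-state solution; it has $l_{\infty}=z_0$ and $c$ given by $(\ast)$, which is an increasing function; (iii) if $f(z_0)<c_{\mathrm{s}}/c_{\infty}<1$, there exist exactly two steady-state solutions $(l_{\infty 1},c_1)$, $(l_{\infty 2},c_2)$ with $0<l_{\infty 1}<z_0<l_{\infty 2}$, where $c_i$ is given by $(\ast)$ with $l_{\infty}=l_{\infty i}$; $c_1$ is increasing on $[0,l_{\infty 1}]$, and $c_2$ is decreasing on $[0,l_{\infty 2}-z_0]$ and increasing on $[l_{\infty 2}-z_0,l_{\infty 2}]$; (iv) if $c_{\mathrm{s}}/c_{\infty}\ge 1$, there is a unique steady-state solution; it has $l_{\infty}>z_0$, and $c$ given by $(\ast)$ is decreasing on $(0,l_{\infty}-z_0]$ and increasing on $[l_{\infty}-z_0,l_{\infty}]$. (II) If $gl_{\mathrm{c}}\ge a$, then there exists a steady-state solution if and only if $c_{\mathrm{s}}>c_{\infty}$; in that case the equation $f(l_{\infty})=c_{\mathrm{s}}/c_{\infty}$ has a unique solution $l_{\infty}>0$, the steady-state solution is unique, given by this $l_{\infty}$ and $(\ast)$, and $c$ is a decreasing function.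
   Context: This is the steady-state problem of a one-dimensional model of axonal growth: $c(x)$ is the tubulin concentration along an axon of length $l_{\infty}$, $a$ is the active transport velocity, $D$ the diffusion coefficient, $g$ the degradation rate, $l_{\mathrm{c}}$ the characteristic length of the growth cone, $c_{\infty}$ the steady-state growth cone concentration, and $c_{\mathrm{s}}$ the (constant) soma concentration. In every case, a steady-state length $l_{\infty}>0$ together with $c$ is a steady-state solution exactly when $f(l_{\infty})=c_{\mathrm{s}}/c_{\infty}$ and $c$ is given by $(\ast)$. *)

theory Defs
  imports "HOL-Analysis.Analysis"
begin

text \<open>Steady-state solution (l, c): l > 0, c in C^2([0,l]) (one-sided derivatives at the
endpoints, i.e. derivatives within [0,l]), the ODE on (0,l) and the boundary conditions.\<close>
definition steady_state ::
  "real \<Rightarrow> real \<Rightarrow> real \<Rightarrow> real \<Rightarrow> real \<Rightarrow> real \<Rightarrow> real \<Rightarrow> (real \<Rightarrow> real) \<Rightarrow> bool" where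
  "steady_state a D g lc cinf cs l c \<longleftrightarrow>
     0 < l \<and>
     (\<exists>c1 c2.
        (\<forall>x\<in>{0..l}. (c has_real_derivative c1 x) (at x within {0..l}) \<and>
                     (c1 has_real_derivative c2 x) (at x within {0..l})) \<and>
        continuous_on {0..l} c2 \<and>
        (\<forall>x\<in>{0<..<l}. D * c2 x - a * c1 x - g * c x = 0) \<and>
        D * c1 l = (a - g * lc) * cinf) \<and>
     c l = cinf \<and> c 0 = cs"

definition RR :: "real \<Rightarrow> real \<Rightarrow> real \<Rightarrow> real" where
  "RR a D g = sqrt (a\<^sup>2 + 4 * g * D)"

definition lam_plus :: "real \<Rightarrow> real \<Rightarrow> real \<Rightarrow> real" where
  "lam_plus a D g = (a + RR a D g) / (2 * D)"

definition lam_minus :: "real \<Rightarrow> real \<Rightarrow> real \<Rightarrow> real" where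
  "lam_minus a D g = (a - RR a D g) / (2 * D)"

definition ff :: "real \<Rightarrow> real \<Rightarrow> real \<Rightarrow> real \<Rightarrow> real \<Rightarrow> real" where
  "ff a D g lc z = (1 / RR a D g) *
     (exp (- lam_plus a D g * z) * ((RR a D g + a) / 2 - g * lc) +
      exp (- lam_minus a D g * z) * ((RR a D g - a) / 2 + g * lc))"

definition cstar :: "real \<Rightarrow> real \<Rightarrow> real \<Rightarrow> real \<Rightarrow> real \<Rightarrow> real \<Rightarrow> real \<Rightarrow> real" where
  "cstar a D g lc cinf l x = (cinf / RR a D g) *
     (((RR a D g + a) / 2 - g * lc) * exp (lam_plus a D g * (x - l)) +
      ((RR a D g - a) / 2 + g * lc) * exp (lam_minus a D g * (x - l)))"

definition z0 :: "real \<Rightarrow> real \<Rightarrow> real \<Rightarrow> real \<Rightarrow> real" where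
  "z0 a D g lc = (D / RR a D g) *
     ln (((RR a D g + a) * (RR a D g + a - 2 * g * lc)) /
         ((RR a D g - a) * (RR a D g - a + 2 * g * lc)))"

end

theory Submission
  imports Defs
begin

lemma aux1: fixes a R G :: real shows "-(a+R)/2*((R+a)/2 - G) - (a-R)/2*((R-a)/2+G) = R*(G - a)"
  by (simp add: field_simps power2_eq_square)
lemma aux2: fixes a R G :: real shows "(R + a) / 2 - G + ((R - a) / 2 + G) = R"
  by (simp add: field_simps)
lemma aux3: fixes D a g R E1 E2 A B p m :: real shows
 "D * ((1/R) * (E1*(-p)*(-p)*A + E2*(-m)*(-m)*B)) + a * ((1/R) * (E1*(-p)*A + E2*(-m)*B)) - g * ((1/R) * (E1*A + E2*B))
  = (1/R) * (E1*A*(D*p\<^sup>2 - a*p - g) + E2*B*(D*m\<^sup>2 - a*m - g))"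
  by (simp add: algebra_simps power2_eq_square)
lemma aux4: fixes D R E E' A B p m :: real shows
  "D*((1/R)*(E*(-p)*A + E'*(-m)*B)) = (1/R)*(-(D*p)*(E*A) - (D*m)*(E'*B))"
  by (simp add: algebra_simps)
lemma aux5: fixes cinf R A B E1 E2 :: real shows
  "cinf / R * (A * E1 + B * E2) = cinf * ((1/R) * (E1 * A + E2 * B))"
  by (simp add: algebra_simps)

lemma aux6: fixes D W2 W1 w a g m p :: real
  assumes "D \<noteq> 0" "D*W2 = a*W1 + g*w" "a/D - m = p" "g/D = -p*m"
  shows "W2 - m*W1 = p*(W1 - m*w)"
proof -
  have ha: "a = D*(p+m)" using assms(1,3) by (simp add: field_simps)
  have hg: "g = -D*p*m" using assms(1,4) by (simp add: field_simps)
  have "D*(W2 - m*W1) = D*(p*(W1 - m*w))" using assms(2) unfolding ha hg by (simp add: algebra_simps)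
  then show ?thesis using assms(1) by simp
qed

lemma aux7: fixes Q E1 X K :: real shows "Q*E1*(X - K) = Q*(E1*X) - E1*(Q*K)"
  by (simp add: algebra_simps)
lemma aux8: fixes R E1 E2 p m A B :: real shows "R * ((1 / R) * (E1 * (- p) * A + E2 * (- m) * B)) = (if R = 0 then 0 else (- m) * B * E2 - E1 * (p * A))"
  by (simp add: algebra_simps)

lemma smo: "(\<And>x y. x \<in> S \<Longrightarrow> y \<in> S \<Longrightarrow> x < y \<Longrightarrow> h x < h y) \<Longrightarrow> strict_mono_on S h"
  by (rule monotone_onI)
lemma sao: "(\<And>x y. x \<in> S \<Longrightarrow> y \<in> S \<Longrightarrow> x < y \<Longrightarrow> h y < h x) \<Longrightarrow> strict_antimono_on S h"
  by (rule monotone_onI)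

lemma aux9: "(Q::real) > 0 \<Longrightarrow> (0 < Q*(X-Y)) \<longleftrightarrow> Y < X" by (simp add: zero_less_mult_iff)
lemma aux10: "(Q::real) > 0 \<Longrightarrow> (Q*(X-Y) < 0) \<longleftrightarrow> X < Y" by (simp add: mult_less_0_iff)
lemma aux11: fixes E A :: real shows "0 \<le> E \<Longrightarrow> E \<le> 1 \<Longrightarrow> E*A \<ge> -\<bar>A\<bar>"
proof -
  assume h: "0 \<le> E" "E \<le> 1"
  have "E * \<bar>A\<bar> \<le> \<bar>A\<bar>" using h by (simp add: mult_left_le_one_le)
  have "-\<bar>A\<bar> \<le> A" by simp
  then have "E*(-\<bar>A\<bar>) \<le> E*A" using h(1) by (rule mult_left_mono)
  then show ?thesis using \<open>E * \<bar>A\<bar> \<le> \<bar>A\<bar>\<close> by simp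
qed

locale ax =
  fixes a D g lc :: real
  assumes a_pos: "a > 0" and D_pos: "D > 0" and g_pos: "g > 0" and lc_pos: "lc > 0"
begin

abbreviation "R \<equiv> RR a D g"
abbreviation "p \<equiv> lam_plus a D g"
abbreviation "m \<equiv> lam_minus a D g"
abbreviation "A \<equiv> (R + a) / 2 - g * lc"
abbreviation "B \<equiv> (R - a) / 2 + g * lc"
abbreviation "f \<equiv> ff a D g lc"

definition f1 :: "real \<Rightarrow> real" where
  "f1 z = (1 / R) * (exp (- p * z) * (- p) * A + exp (- m * z) * (- m) * B)"
definition f2 :: "real \<Rightarrow> real" where
  "f2 z = (1 / R) * (exp (- p * z) * (- p) * (- p) * A + exp (- m * z) * (- m) * (- m) * B)"

lemma R_sq: "R\<^sup>2 = a\<^sup>2 + 4 * g * D"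
  unfolding RR_def using a_pos g_pos D_pos by simp

lemma R_gt: "R > a"
proof -
  have "a\<^sup>2 < a\<^sup>2 + 4 * g * D" using g_pos D_pos by simp
  then have "sqrt (a\<^sup>2) < R" unfolding RR_def by (simp only: real_sqrt_less_iff)
  then show ?thesis using a_pos by simp
qed

lemma R_pos: "R > 0" using R_gt a_pos by simp

lemma p_pos: "p > 0" unfolding lam_plus_def using R_pos a_pos D_pos by simp
lemma m_neg: "m < 0" unfolding lam_minus_def using R_gt D_pos by (simp add: divide_neg_pos)
lemma B_pos: "B > 0"
proof -
  have "g * lc > 0" using g_pos lc_pos by simp
  moreover have "(R - a) / 2 > 0" using R_gt by simp
  ultimately show ?thesis by linarith
qed

lemma Dp: "D * p = (a + R) / 2" unfolding lam_plus_def using D_pos by simp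
lemma Dm: "D * m = (a - R) / 2" unfolding lam_minus_def using D_pos by simp

lemma root_p: "D * p\<^sup>2 - a * p - g = 0"
proof -
  have "D * (D * p\<^sup>2 - a * p - g) = (D*p)\<^sup>2 - a * (D*p) - g * D" by (simp add: algebra_simps power2_eq_square)
  also have "\<dots> = 0" unfolding Dp using R_sq by (simp add: algebra_simps power2_eq_square)
  finally show ?thesis using D_pos by simp
qed

lemma root_m: "D * m\<^sup>2 - a * m - g = 0"
proof -
  have "D * (D * m\<^sup>2 - a * m - g) = (D*m)\<^sup>2 - a * (D*m) - g * D" by (simp add: algebra_simps power2_eq_square)
  also have "\<dots> = ((a - R)/2)\<^sup>2 - a * ((a - R)/2) - g * D" by (simp only: Dm)
  also have "\<dots> = (R\<^sup>2 - a\<^sup>2) / 4 - g * D" by (simp add: power2_eq_square field_simps)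
  also have "\<dots> = 0" using R_sq by simp
  finally show ?thesis using D_pos by simp
qed

lemma pm_sum: "a / D - m = p"
  using Dp Dm D_pos by (simp add: field_simps)

lemma pm_prod: "g / D = - p * m"
proof -
  have "D * D * (p * m) = (D*p) * (D*m)" by (simp add: algebra_simps)
  also have "\<dots> = ((a + R)/2) * ((a - R)/2)" by (simp only: Dp Dm)
  also have "\<dots> = (a\<^sup>2 - R\<^sup>2) / 4" by (simp add: power2_eq_square field_simps)
  also have "\<dots> = - g * D" using R_sq by simp
  finally have h: "D * D * (p * m) = - g * D" .
  have "D * (D * (p * m) + g) = 0" using h by (simp add: algebra_simps)
  then have "D * (p * m) + g = 0" using D_pos by simp
  then have "g = D * (- p * m)" by simp
  then have "g / D = D * (- p * m) / D" by simp
  also have "\<dots> = - p * m" using D_pos by simp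
  finally show ?thesis .
qed

lemma exp_deriv: "((\<lambda>z. exp (- k * z)) has_real_derivative exp (- k * z) * (- k)) (at z)"
  by (auto intro!: derivative_eq_intros)

lemma f_deriv: "(f has_real_derivative f1 z) (at z)"
proof -
  have "((\<lambda>z. (1 / R) * (exp (- p * z) * A + exp (- m * z) * B)) has_real_derivative f1 z) (at z)"
    unfolding f1_def
    by (intro DERIV_cmult DERIV_add DERIV_cmult_right exp_deriv)
  then show ?thesis unfolding ff_def .
qed

lemma f1_deriv: "(f1 has_real_derivative f2 z) (at z)"
proof -
  have "((\<lambda>z. (1 / R) * (exp (- p * z) * (- p) * A + exp (- m * z) * (- m) * B)) has_real_derivative f2 z) (at z)"
    unfolding f2_def
    by (intro DERIV_cmult DERIV_add DERIV_cmult_right exp_deriv)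
  then show ?thesis unfolding f1_def[abs_def] .
qed

lemma ode_f: "D * f2 z + a * f1 z - g * f z = 0"
  unfolding f1_def f2_def ff_def aux3 root_p root_m by simp

lemma f0: "f 0 = 1"
  unfolding ff_def using R_pos by (simp add: aux2)

lemma f1_0: "D * f1 0 = g * lc - a"
proof -
  have "D * f1 0 = (1/R) * (- (D*p) * (1 * A) - (D*m) * (1 * B))" unfolding f1_def aux4 by simp
  also have "\<dots> = (1/R) * (-(a+R)/2*A - (a-R)/2*B)" by (simp only: Dp Dm mult_1_left minus_divide_left)
  also have "\<dots> = (1/R) * (R * (g * lc - a))" by (simp only: aux1)
  finally show ?thesis using R_pos by simp
qed

lemma cstar_eq: "cstar a D g lc cinf l x = cinf * f (l - x)"
proof -
  have e: "p * (x - l) = - p * (l - x)" "m * (x - l) = - m * (l - x)"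
    by (metis minus_diff_eq mult_minus_left mult_minus_right)+
  show ?thesis unfolding cstar_def ff_def e by (rule aux5)
qed

definition "Cf cinf l x = cinf * f (l - x)"
definition "C1f cinf l x = - cinf * f1 (l - x)"
definition "C2f cinf l x = cinf * f2 (l - x)"

lemma dC: "(Cf cinf l has_real_derivative C1f cinf l x) (at x)"
proof -
  have "((\<lambda>x. f (l - x)) has_real_derivative f1 (l - x) * (-1)) (at x)"
    by (rule DERIV_chain2[OF f_deriv]) (auto intro!: derivative_eq_intros)
  then have "((\<lambda>x. cinf * f (l - x)) has_real_derivative cinf * (f1 (l - x) * (-1))) (at x)"
    by (rule DERIV_cmult)
  then show ?thesis unfolding Cf_def[abs_def] C1f_def by simp
qed

lemma dC1: "(C1f cinf l has_real_derivative C2f cinf l x) (at x)"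
proof -
  have "((\<lambda>x. f1 (l - x)) has_real_derivative f2 (l - x) * (-1)) (at x)"
    by (rule DERIV_chain2[OF f1_deriv]) (auto intro!: derivative_eq_intros)
  then have "((\<lambda>x. - cinf * f1 (l - x)) has_real_derivative - cinf * (f2 (l - x) * (-1))) (at x)"
    by (rule DERIV_cmult)
  then show ?thesis unfolding C1f_def[abs_def] C2f_def by simp
qed

lemma odeC: "D * C2f cinf l x - a * C1f cinf l x - g * Cf cinf l x = 0"
proof -
  have "D * C2f cinf l x - a * C1f cinf l x - g * Cf cinf l x
      = cinf * (D * f2 (l - x) + a * f1 (l - x) - g * f (l - x))"
    unfolding C2f_def C1f_def Cf_def by (simp add: algebra_simps)
  then show ?thesis using ode_f by simp
qed

lemma C1l: "D * C1f cinf l l = (a - g * lc) * cinf"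
proof -
  have "D * C1f cinf l l = - cinf * (D * f1 0)" unfolding C1f_def by simp
  then show ?thesis unfolding f1_0 by (simp add: algebra_simps)
qed

lemma Cl: "Cf cinf l l = cinf" unfolding Cf_def using f0 by simp

lemma cont_C2: "continuous_on S (C2f cinf l)"
  unfolding C2f_def[abs_def] f2_def by (intro continuous_intros)

lemma cstar_Cf: "cstar a D g lc cinf l = Cf cinf l"
  by (rule ext) (simp add: Cf_def cstar_eq)

lemma exist:
  assumes "l > 0" "cs = cinf * f l"
  shows "steady_state a D g lc cinf cs l (cstar a D g lc cinf l)"
  unfolding steady_state_def cstar_Cf
proof (intro conjI)
  show "0 < l" by fact
  show "Cf cinf l l = cinf" by (rule Cl)
  show "Cf cinf l 0 = cs" unfolding Cf_def using assms by simp
  show "\<exists>c1 c2. (\<forall>x\<in>{0..l}. (Cf cinf l has_real_derivative c1 x) (at x within {0..l}) \<and>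
                     (c1 has_real_derivative c2 x) (at x within {0..l})) \<and>
        continuous_on {0..l} c2 \<and>
        (\<forall>x\<in>{0<..<l}. D * c2 x - a * c1 x - g * Cf cinf l x = 0) \<and>
        D * c1 l = (a - g * lc) * cinf"
    apply (rule exI[where x="C1f cinf l"], rule exI[where x="C2f cinf l"])
    using dC dC1 cont_C2 odeC C1l by (auto intro: has_field_derivative_at_within)
qed

lemma unique:
  assumes "steady_state a D g lc cinf cs l c"
  shows "\<forall>x\<in>{0..l}. c x = cstar a D g lc cinf l x" "cs = cinf * f l"
proof -
  define S where "S = {0..l::real}"
  obtain c1 c2 where l: "0 < l"
    and d: "\<forall>x\<in>S. (c has_real_derivative c1 x) (at x within S) \<and> (c1 has_real_derivative c2 x) (at x within S)"
    and cont2: "continuous_on S c2"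
    and ode: "\<forall>x\<in>{0<..<l}. D * c2 x - a * c1 x - g * c x = 0"
    and bd: "D * c1 l = (a - g * lc) * cinf" and cl: "c l = cinf" and c0: "c 0 = cs"
    using assms unfolding steady_state_def S_def by blast
  let ?C = "Cf cinf l" and ?C1 = "C1f cinf l" and ?C2 = "C2f cinf l"
  have contc: "continuous_on S c" using d by (intro DERIV_continuous_on[where D=c1]) auto
  have contc1: "continuous_on S c1" using d by (intro DERIV_continuous_on[where D=c2]) auto
  have odeS: "D * c2 x - a * c1 x - g * c x = 0" if x: "x \<in> S" for x
  proof -
    have cc: "continuous_on (closure {0<..<l}) (\<lambda>x. D * c2 x - a * c1 x - g * c x)"
      using l contc contc1 cont2 unfolding S_def by (auto intro!: continuous_intros)
    show ?thesis by (rule continuous_constant_on_closure[OF cc]) (use ode x l S_def in auto)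
  qed
  have dw: "((\<lambda>x. c x - ?C x) has_real_derivative c1 x - ?C1 x) (at x within S)" if "x \<in> S" for x
    using d that by (intro DERIV_diff has_field_derivative_at_within[OF dC]) auto
  have dW: "((\<lambda>x. c1 x - ?C1 x) has_real_derivative c2 x - ?C2 x) (at x within S)" if "x \<in> S" for x
    using d that by (intro DERIV_diff has_field_derivative_at_within[OF dC1]) auto
  define u where "u x = (c1 x - ?C1 x) - m * (c x - ?C x)" for x
  have du: "(u has_real_derivative p * u x) (at x within S)" if x: "x \<in> S" for x
  proof -
    have "(u has_real_derivative (c2 x - ?C2 x) - m * (c1 x - ?C1 x)) (at x within S)"
      unfolding u_def[abs_def] by (rule DERIV_diff[OF dW[OF x] DERIV_cmult[OF dw[OF x]]])
    moreover have "(c2 x - ?C2 x) - m * (c1 x - ?C1 x) = p * u x"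
      unfolding u_def
    proof (rule aux6)
      show "D \<noteq> 0" using D_pos by simp
      show "D * (c2 x - ?C2 x) = a * (c1 x - ?C1 x) + g * (c x - ?C x)"
        using odeS[OF x] odeC[of cinf l x] by (simp add: algebra_simps)
      show "a / D - m = p" by (rule pm_sum)
      show "g / D = - p * m" by (rule pm_prod)
    qed
    ultimately show ?thesis by simp
  qed
  have c1l: "c1 l = ?C1 l" using bd C1l[of cinf l] D_pos by (metis less_irrefl mult_cancel_left)
  have ul: "u l = 0" unfolding u_def c1l using cl Cl by simp
  have lS: "l \<in> S" using l S_def by simp
  have "\<exists>k. \<forall>x\<in>S. u x * exp (- p * x) = k"
  proof (rule has_field_derivative_zero_constant)
    show "convex S" unfolding S_def by simp
    fix x assume x: "x \<in> S"
    have "((\<lambda>x. u x * exp (- p * x)) has_real_derivative p * u x * exp (- p * x) + exp (- p * x) * (- p) * u x) (at x within S)"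
      by (intro DERIV_mult du[OF x] has_field_derivative_at_within[OF exp_deriv])
    then show "((\<lambda>x. u x * exp (- p * x)) has_real_derivative 0) (at x within S)"
      by (simp add: algebra_simps)
  qed
  then obtain k where k: "\<forall>x\<in>S. u x * exp (- p * x) = k" by blast
  have k0: "k = 0" using k lS ul by force
  have u0: "u x = 0" if "x \<in> S" for x using k k0 that by simp
  have "\<exists>k. \<forall>x\<in>S. (c x - ?C x) * exp (- m * x) = k"
  proof (rule has_field_derivative_zero_constant)
    show "convex S" unfolding S_def by simp
    fix x assume x: "x \<in> S"
    have "((\<lambda>x. (c x - ?C x) * exp (- m * x)) has_real_derivative (c1 x - ?C1 x) * exp (- m * x) + exp (- m * x) * (- m) * (c x - ?C x)) (at x within S)"
      by (intro DERIV_mult dw[OF x] has_field_derivative_at_within[OF exp_deriv])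
    moreover have "(c1 x - ?C1 x) * exp (- m * x) + exp (- m * x) * (- m) * (c x - ?C x) = u x * exp (- m * x)"
      unfolding u_def by (simp add: algebra_simps)
    ultimately show "((\<lambda>x. (c x - ?C x) * exp (- m * x)) has_real_derivative 0) (at x within S)"
      using u0[OF x] by simp
  qed
  then obtain k' where k': "\<forall>x\<in>S. (c x - ?C x) * exp (- m * x) = k'" by blast
  have "k' = 0" using k' lS cl Cl by force
  then have w0: "c x = ?C x" if "x \<in> S" for x using k' that by simp
  then show "\<forall>x\<in>{0..l}. c x = cstar a D g lc cinf l x" unfolding cstar_Cf S_def by blast
  have "0 \<in> S" using l S_def by simp
  then show "cs = cinf * f l" using w0 c0 unfolding Cf_def by force
qed

definition "K = p * A / ((- m) * B)"

lemma mB_pos: "(- m) * B > 0"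
proof -
  have "- m > 0" using m_neg by simp
  then show ?thesis using B_pos by (rule mult_pos_pos)
qed

lemma f1_factor: "R * f1 z = (- m) * B * exp (- p * z) * (exp ((p - m) * z) - K)"
proof -
  have e0: "- p * z + (p - m) * z = - m * z" by (simp add: algebra_simps)
  have e: "exp (- p * z) * exp ((p - m) * z) = exp (- m * z)" unfolding mult_exp_exp e0 ..
  have nz: "(- m) * B \<noteq> 0" using mB_pos by (metis order_less_irrefl)
  have k: "(- m) * B * K = p * A" unfolding K_def using nz by (metis nonzero_mult_div_cancel_left times_divide_eq_right)
  have "(- m) * B * exp (- p * z) * (exp ((p - m) * z) - K) = (- m) * B * exp (- m * z) - exp (- p * z) * (p * A)"
    unfolding aux7 e k ..
  moreover have "R * f1 z = (- m) * B * exp (- m * z) - exp (- p * z) * (p * A)"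
    unfolding f1_def aux8 using R_pos by simp
  ultimately show ?thesis by simp
qed

lemma f1_pos_iff: "f1 z > 0 \<longleftrightarrow> exp ((p - m) * z) > K"
proof -
  have q: "(- m) * B * exp (- p * z) > 0" by (rule mult_pos_pos[OF mB_pos exp_gt_zero])
  have "f1 z > 0 \<longleftrightarrow> R * f1 z > 0" using R_pos by (simp add: zero_less_mult_iff)
  also have "\<dots> \<longleftrightarrow> K < exp ((p - m) * z)" unfolding f1_factor by (rule aux9[OF q])
  finally show ?thesis .
qed

lemma f1_neg_iff: "f1 z < 0 \<longleftrightarrow> exp ((p - m) * z) < K"
proof -
  have q: "(- m) * B * exp (- p * z) > 0" by (rule mult_pos_pos[OF mB_pos exp_gt_zero])
  have "f1 z < 0 \<longleftrightarrow> R * f1 z < 0" using R_pos by (simp add: mult_less_0_iff)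
  also have "\<dots> \<longleftrightarrow> exp ((p - m) * z) < K" unfolding f1_factor by (rule aux10[OF q])
  finally show ?thesis .
qed

lemma pm_diff: "p - m = R / D"
  unfolding lam_plus_def lam_minus_def using D_pos by (simp add: field_simps)

lemma pm_diff_pos: "p - m > 0" using p_pos m_neg by simp

lemma f_cont: "continuous_on S f"
  by (rule DERIV_continuous_on[where D=f1]) (rule has_field_derivative_at_within[OF f_deriv])

lemma f_inc: assumes "x < y" "\<And>z. x < z \<Longrightarrow> z < y \<Longrightarrow> f1 z > 0" shows "f x < f y"
proof (rule DERIV_pos_imp_increasing_open[OF assms(1)])
  show "\<exists>y. DERIV f z :> y \<and> 0 < y" if "x < z" "z < y" for z using f_deriv assms(2) that by blast
  show "continuous_on {x..y} f" by (rule f_cont)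
qed

lemma f_dec: assumes "x < y" "\<And>z. x < z \<Longrightarrow> z < y \<Longrightarrow> f1 z < 0" shows "f y < f x"
proof (rule DERIV_neg_imp_decreasing_open[OF assms(1)])
  show "\<exists>y. DERIV f z :> y \<and> y < 0" if "x < z" "z < y" for z using f_deriv assms(2) that by blast
  show "continuous_on {x..y} f" by (rule f_cont)
qed

lemma f_big: "\<exists>z \<ge> w. f z \<ge> t"
proof -
  define z where "z = max w (max 0 ((t * R + \<bar>A\<bar>) / ((- m) * B)))"
  have z0: "z \<ge> 0" and zw: "z \<ge> w" and z1: "z \<ge> (t * R + \<bar>A\<bar>) / ((- m) * B)" unfolding z_def by auto
  have Rf: "R * f z = exp (- p * z) * A + exp (- m * z) * B" unfolding ff_def using R_pos by simp
  have e1: "exp (- p * z) \<le> 1" using p_pos z0 by simp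
  have h1: "exp (- p * z) * A \<ge> - \<bar>A\<bar>" by (rule aux11) (use e1 in auto)
  have "exp (- m * z) \<ge> 1 + (- m * z)" by (rule exp_ge_add_one_self)
  then have "exp (- m * z) \<ge> (- m) * z" by simp
  then have h2: "(- m) * z * B \<le> exp (- m * z) * B" by (rule mult_right_mono) (use B_pos in simp)
  have "t * R + \<bar>A\<bar> \<le> z * ((- m) * B)" using z1 by (simp only: pos_divide_le_eq[OF mB_pos])
  moreover have "(- m) * z * B = z * ((- m) * B)" by (simp only: mult.assoc mult.commute mult.left_commute)
  ultimately have h3: "t * R + \<bar>A\<bar> \<le> (- m) * z * B" by metis
  have "R * f z \<ge> t * R" using Rf h1 h2 h3 by linarith
  then have "R * f z \<ge> R * t" by (simp add: mult.commute)
  then have "f z \<ge> t" using R_pos by simp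
  then show ?thesis using zw by blast
qed

lemma K_gt1: assumes "g * lc < a" shows "K > 1"
proof -
  have "D * f1 0 < 0" using f1_0 assms by simp
  then have "f1 0 < 0" using D_pos by (simp add: mult_less_0_iff)
  then show ?thesis unfolding f1_neg_iff by simp
qed

lemma K_le1: assumes "g * lc \<ge> a" shows "K \<le> 1"
proof -
  have "D * f1 0 \<ge> 0" using f1_0 assms by simp
  then have "f1 0 \<ge> 0" using D_pos by (simp add: zero_le_mult_iff)
  then have "\<not> f1 0 < 0" by simp
  then show ?thesis unfolding f1_neg_iff by simp
qed

lemma z0_eq: "z0 a D g lc = ln K / (p - m)"
proof -
  have pA: "(R + a) * (R + a - 2 * g * lc) = 4 * D * (p * A)"
    unfolding lam_plus_def using D_pos by (simp add: field_simps)
  have mB: "(R - a) * (R - a + 2 * g * lc) = 4 * D * ((- m) * B)"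
    unfolding lam_minus_def using D_pos by (simp add: field_simps)
  have "((R + a) * (R + a - 2 * g * lc)) / ((R - a) * (R - a + 2 * g * lc)) = K"
    unfolding pA mB K_def using D_pos by (simp only: mult_divide_mult_cancel_left_if) simp
  then show ?thesis unfolding z0_def pm_diff using R_pos D_pos by simp
qed

lemma z0_pos: assumes "g * lc < a" shows "z0 a D g lc > 0"
  unfolding z0_eq using K_gt1[OF assms] pm_diff_pos by simp

lemma f1_before: assumes "g * lc < a" "z < z0 a D g lc" shows "f1 z < 0"
proof -
  have Kp: "K > 0" using K_gt1[OF assms(1)] by simp
  have "(p - m) * z < ln K" using assms(2) pm_diff_pos unfolding z0_eq by (simp add: pos_less_divide_eq mult.commute)
  then have "exp ((p - m) * z) < exp (ln K)" by simp
  then show ?thesis unfolding f1_neg_iff using Kp by simp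
qed

lemma f1_after: assumes "g * lc < a" "z > z0 a D g lc" shows "f1 z > 0"
proof -
  have Kp: "K > 0" using K_gt1[OF assms(1)] by simp
  have "(p - m) * z > ln K" using assms(2) pm_diff_pos unfolding z0_eq by (simp add: pos_divide_less_eq mult.commute)
  then have "exp ((p - m) * z) > exp (ln K)" by simp
  then show ?thesis unfolding f1_pos_iff using Kp by simp
qed

lemma f1_II: assumes "g * lc \<ge> a" "z > 0" shows "f1 z > 0"
proof -
  have "exp ((p - m) * z) > 1" using assms(2) pm_diff_pos by simp
  then show ?thesis unfolding f1_pos_iff using K_le1[OF assms(1)] by linarith
qed

abbreviation "Z \<equiv> z0 a D g lc"

lemma dec1: assumes "g * lc < a" "0 \<le> x" "x < y" "y \<le> Z" shows "f y < f x"
  by (rule f_dec[OF assms(3)]) (use assms f1_before in force)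

lemma inc1: assumes "g * lc < a" "Z \<le> x" "x < y" shows "f x < f y"
  by (rule f_inc[OF assms(3)]) (use assms f1_after in force)

lemma inc2: assumes "g * lc \<ge> a" "0 \<le> x" "x < y" shows "f x < f y"
  by (rule f_inc[OF assms(3)]) (use assms f1_II in force)

lemma fmin: assumes "g * lc < a" "0 \<le> l" "l \<noteq> Z" shows "f Z < f l"
proof (cases "l < Z")
  case True then show ?thesis using dec1[OF assms(1,2)] by simp
next
  case False then have "Z < l" using assms(3) by simp
  then show ?thesis using inc1[OF assms(1)] by simp
qed

lemma fZ1: assumes "g * lc < a" shows "f Z < 1"
  using dec1[OF assms, of 0 Z] z0_pos[OF assms] f0 by simp

lemma inj1: assumes "g * lc < a" "0 \<le> x" "x \<le> Z" "0 \<le> y" "y \<le> Z" "f x = f y" shows "x = y"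
proof (rule ccontr)
  assume "x \<noteq> y"
  then consider "x < y" | "y < x" by linarith
  then show False
  proof cases
    case 1 then show False using dec1[OF assms(1,2) 1 assms(5)] assms(6) by simp
  next
    case 2 then show False using dec1[OF assms(1,4) 2 assms(3)] assms(6) by simp
  qed
qed

lemma inj2: assumes "g * lc < a" "Z \<le> x" "Z \<le> y" "f x = f y" shows "x = y"
proof (rule ccontr)
  assume "x \<noteq> y"
  then consider "x < y" | "y < x" by linarith
  then show False
  proof cases
    case 1 then show False using inc1[OF assms(1,2) 1] assms(4) by simp
  next
    case 2 then show False using inc1[OF assms(1,3) 2] assms(4) by simp
  qed
qed

context
  fixes cinf cs :: real
  assumes cinf_pos: "cinf > 0" and cs_nn: "cs \<ge> 0"
begin

lemma sol:
  assumes "steady_state a D g lc cinf cs l c"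
  shows "0 < l" "f l = cs / cinf" "\<forall>x\<in>{0..l}. c x = cstar a D g lc cinf l x"
proof -
  show "0 < l" using assms unfolding steady_state_def by blast
  show "f l = cs / cinf" using unique(2)[OF assms] cinf_pos by simp
  show "\<forall>x\<in>{0..l}. c x = cstar a D g lc cinf l x" by (rule unique(1)[OF assms])
qed

lemma ex: assumes "0 < l" "f l = cs / cinf" shows "steady_state a D g lc cinf cs l (cstar a D g lc cinf l)"
  by (rule exist[OF assms(1)]) (use assms(2) cinf_pos in simp)

lemma Cv: "cstar a D g lc cinf l x < cstar a D g lc cinf l y \<longleftrightarrow> f (l - x) < f (l - y)"
  unfolding cstar_eq using cinf_pos by simp

lemma I1: assumes "g * lc < a" "cs / cinf < f Z" shows "\<not> (\<exists>l c. steady_state a D g lc cinf cs l c)"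
proof
  assume "\<exists>l c. steady_state a D g lc cinf cs l c"
  then obtain l c where S: "steady_state a D g lc cinf cs l c" by blast
  have "f Z \<le> f l" using fmin[OF assms(1), of l] sol(1)[OF S] by (cases "l = Z") auto
  then show False using sol(2)[OF S] assms(2) by simp
qed

lemma I2: assumes "g * lc < a" "cs / cinf = f Z"
  shows "steady_state a D g lc cinf cs Z (cstar a D g lc cinf Z) \<and>
          (\<forall>l c. steady_state a D g lc cinf cs l c \<longrightarrow> l = Z \<and> (\<forall>x\<in>{0..l}. c x = cstar a D g lc cinf Z x)) \<and>
          strict_mono_on {0..Z} (cstar a D g lc cinf Z)"
proof (intro conjI allI impI)
  show "steady_state a D g lc cinf cs Z (cstar a D g lc cinf Z)"
    using ex[OF z0_pos[OF assms(1)]] assms(2) by simp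
  fix l c assume S: "steady_state a D g lc cinf cs l c"
  show lZ: "l = Z"
  proof (rule ccontr)
    assume "l \<noteq> Z"
    then have "f Z < f l" using fmin[OF assms(1)] sol(1)[OF S] by simp
    then show False using sol(2)[OF S] assms(2) by simp
  qed
  show "\<forall>x\<in>{0..l}. c x = cstar a D g lc cinf Z x" using sol(3)[OF S] lZ by simp
next
  show "strict_mono_on {0..Z} (cstar a D g lc cinf Z)"
  proof (rule smo)
    fix x y assume "x \<in> {0..Z}" "y \<in> {0..Z}" "x < y"
    then show "cstar a D g lc cinf Z x < cstar a D g lc cinf Z y"
      unfolding Cv using dec1[OF assms(1), of "Z - y" "Z - x"] by simp
  qed
qed

lemma I3: assumes "g * lc < a" "f Z < cs / cinf" "cs / cinf < 1"
  shows "\<exists>l1 l2. 0 < l1 \<and> l1 < Z \<and> Z < l2 \<and>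
             steady_state a D g lc cinf cs l1 (cstar a D g lc cinf l1) \<and>
             steady_state a D g lc cinf cs l2 (cstar a D g lc cinf l2) \<and>
             (\<forall>l c. steady_state a D g lc cinf cs l c \<longrightarrow> (l = l1 \<or> l = l2) \<and> (\<forall>x\<in>{0..l}. c x = cstar a D g lc cinf l x)) \<and>
             strict_mono_on {0..l1} (cstar a D g lc cinf l1) \<and>
             strict_antimono_on {0..l2 - Z} (cstar a D g lc cinf l2) \<and>
             strict_mono_on {l2 - Z..l2} (cstar a D g lc cinf l2)"
proof -
  have Zp: "Z > 0" by (rule z0_pos[OF assms(1)])
  obtain l1 where l1: "0 \<le> l1" "l1 \<le> Z" "f l1 = cs / cinf"
    using IVT2'[of f Z "cs / cinf" 0, OF _ _ _ f_cont] assms Zp f0 by auto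
  have l1p: "0 < l1" using l1 assms(3) f0 by (cases "l1 = 0") auto
  have l1Z: "l1 < Z" using l1 assms(2) by (cases "l1 = Z") auto
  obtain w where w: "w \<ge> Z" "f w \<ge> cs / cinf" using f_big by blast
  obtain l2 where l2: "Z \<le> l2" "l2 \<le> w" "f l2 = cs / cinf"
    using IVT'[of f Z "cs / cinf" w, OF _ _ _ f_cont] assms w by auto
  have l2Z: "Z < l2" using l2 assms(2) by (cases "l2 = Z") auto
  show ?thesis
  proof (intro exI conjI allI impI)
    show "0 < l1" "l1 < Z" "Z < l2" by fact+
    show "steady_state a D g lc cinf cs l1 (cstar a D g lc cinf l1)" using ex[OF l1p l1(3)] .
    show "steady_state a D g lc cinf cs l2 (cstar a D g lc cinf l2)" using ex l2Z Zp l2(3) by simp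
    fix l c assume S: "steady_state a D g lc cinf cs l c"
    show "\<forall>x\<in>{0..l}. c x = cstar a D g lc cinf l x" by (rule sol(3)[OF S])
    have lp: "0 < l" and fl: "f l = cs / cinf" using sol[OF S] by auto
    consider "l < Z" | "l = Z" | "l > Z" by linarith
    then show "l = l1 \<or> l = l2"
    proof cases
      case 1 then have "l = l1" using inj1[OF assms(1), of l l1] lp l1 fl by simp
      then show ?thesis by simp
    next
      case 2 then show ?thesis using fl assms(2) by simp
    next
      case 3 then have "l = l2" using inj2[OF assms(1), of l l2] l2 fl by simp
      then show ?thesis by simp
    qed
  next
    show "strict_mono_on {0..l1} (cstar a D g lc cinf l1)"
    proof (rule smo)
      fix x y assume "x \<in> {0..l1}" "y \<in> {0..l1}" "x < y"
      then show "cstar a D g lc cinf l1 x < cstar a D g lc cinf l1 y"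
        unfolding Cv using dec1[OF assms(1), of "l1 - y" "l1 - x"] l1 by simp
    qed
    show "strict_antimono_on {0..l2 - Z} (cstar a D g lc cinf l2)"
    proof (rule sao)
      fix x y assume "x \<in> {0..l2 - Z}" "y \<in> {0..l2 - Z}" "x < y"
      then show "cstar a D g lc cinf l2 y < cstar a D g lc cinf l2 x"
        unfolding Cv using inc1[OF assms(1), of "l2 - y" "l2 - x"] by simp
    qed
    show "strict_mono_on {l2 - Z..l2} (cstar a D g lc cinf l2)"
    proof (rule smo)
      fix x y assume "x \<in> {l2 - Z..l2}" "y \<in> {l2 - Z..l2}" "x < y"
      then show "cstar a D g lc cinf l2 x < cstar a D g lc cinf l2 y"
        unfolding Cv using dec1[OF assms(1), of "l2 - y" "l2 - x"] by simp
    qed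
  qed
qed

lemma I4: assumes "g * lc < a" "cs / cinf \<ge> 1"
  shows "\<exists>l. Z < l \<and> steady_state a D g lc cinf cs l (cstar a D g lc cinf l) \<and>
             (\<forall>l' c. steady_state a D g lc cinf cs l' c \<longrightarrow> l' = l \<and> (\<forall>x\<in>{0..l'}. c x = cstar a D g lc cinf l x)) \<and>
             strict_antimono_on {0<..l - Z} (cstar a D g lc cinf l) \<and>
             strict_mono_on {l - Z..l} (cstar a D g lc cinf l)"
proof -
  have Zp: "Z > 0" by (rule z0_pos[OF assms(1)])
  have fZ: "f Z < 1" by (rule fZ1[OF assms(1)])
  obtain w where w: "w \<ge> Z" "f w \<ge> cs / cinf" using f_big by blast
  obtain l where l: "Z \<le> l" "l \<le> w" "f l = cs / cinf"
    using IVT'[of f Z "cs / cinf" w, OF _ _ _ f_cont] assms w fZ by auto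
  have lZ: "Z < l" using l assms(2) fZ by (cases "l = Z") auto
  show ?thesis
  proof (intro exI conjI allI impI)
    show "Z < l" by fact
    show "steady_state a D g lc cinf cs l (cstar a D g lc cinf l)" using ex lZ Zp l(3) by simp
    fix l' c assume S: "steady_state a D g lc cinf cs l' c"
    have lp: "0 < l'" and fl: "f l' = cs / cinf" using sol[OF S] by auto
    have "Z < l'"
    proof (rule ccontr)
      assume "\<not> Z < l'"
      then have "f l' < f 0" using dec1[OF assms(1), of 0 l'] lp by simp
      then show False using f0 fl assms(2) by simp
    qed
    then show l'l: "l' = l" using inj2[OF assms(1), of l' l] l fl by simp
    show "\<forall>x\<in>{0..l'}. c x = cstar a D g lc cinf l x" using sol(3)[OF S] l'l by simp
  next
    show "strict_antimono_on {0<..l - Z} (cstar a D g lc cinf l)"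
    proof (rule sao)
      fix x y assume "x \<in> {0<..l - Z}" "y \<in> {0<..l - Z}" "x < y"
      then show "cstar a D g lc cinf l y < cstar a D g lc cinf l x"
        unfolding Cv using inc1[OF assms(1), of "l - y" "l - x"] by simp
    qed
    show "strict_mono_on {l - Z..l} (cstar a D g lc cinf l)"
    proof (rule smo)
      fix x y assume "x \<in> {l - Z..l}" "y \<in> {l - Z..l}" "x < y"
      then show "cstar a D g lc cinf l x < cstar a D g lc cinf l y"
        unfolding Cv using dec1[OF assms(1), of "l - y" "l - x"] by simp
    qed
  qed
qed

lemma t_gt1: "cs / cinf > 1 \<longleftrightarrow> cs > cinf" using cinf_pos by simp

lemma exII: assumes "g * lc \<ge> a" "cs > cinf" shows "\<exists>l. 0 < l \<and> f l = cs / cinf"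
proof -
  have t: "cs / cinf > 1" using t_gt1 assms(2) by simp
  obtain w where w: "w \<ge> 0" "f w \<ge> cs / cinf" using f_big by blast
  obtain l where l: "0 \<le> l" "l \<le> w" "f l = cs / cinf"
    using IVT'[of f 0 "cs / cinf" w, OF _ _ _ f_cont] t w f0 by auto
  have "l \<noteq> 0" using l t f0 by auto
  then have "0 < l" using l(1) by simp
  then show ?thesis using l(3) by blast
qed

lemma injII: assumes "g * lc \<ge> a" "0 \<le> x" "0 \<le> y" "f x = f y" shows "x = y"
proof (rule ccontr)
  assume "x \<noteq> y"
  then consider "x < y" | "y < x" by linarith
  then show False
  proof cases
    case 1 then show False using inc2[OF assms(1,2) 1] assms(4) by simp
  next
    case 2 then show False using inc2[OF assms(1,3) 2] assms(4) by simp
  qed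
qed

lemma II1: assumes "g * lc \<ge> a" shows "(\<exists>l c. steady_state a D g lc cinf cs l c) \<longleftrightarrow> cs > cinf"
proof
  assume "\<exists>l c. steady_state a D g lc cinf cs l c"
  then obtain l c where S: "steady_state a D g lc cinf cs l c" by blast
  have "f 0 < f l" using inc2[OF assms, of 0 l] sol(1)[OF S] by simp
  then have "cs / cinf > 1" using sol(2)[OF S] f0 by simp
  then show "cs > cinf" using t_gt1 by simp
next
  assume "cs > cinf"
  then obtain l where "0 < l" "f l = cs / cinf" using exII[OF assms] by blast
  then show "\<exists>l c. steady_state a D g lc cinf cs l c" using ex by blast
qed

lemma II2: assumes "g * lc \<ge> a" "cs > cinf"
  shows "(\<exists>!l. l > 0 \<and> f l = cs / cinf) \<and>
          (\<forall>l. l > 0 \<and> f l = cs / cinf \<longrightarrow> steady_state a D g lc cinf cs l (cstar a D g lc cinf l)) \<and>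
          (\<forall>l c. steady_state a D g lc cinf cs l c \<longrightarrow> l > 0 \<and> f l = cs / cinf \<and> (\<forall>x\<in>{0..l}. c x = cstar a D g lc cinf l x) \<and>
                            strict_antimono_on {0..l} c)"
proof (intro conjI allI impI)
  show "\<exists>!l. l > 0 \<and> f l = cs / cinf"
    using exII[OF assms] injII[OF assms(1)] by (metis less_imp_le)
  show "steady_state a D g lc cinf cs l (cstar a D g lc cinf l)" if "l > 0 \<and> f l = cs / cinf" for l
    using ex that by blast
  fix l c assume S: "steady_state a D g lc cinf cs l c"
  show "l > 0" "f l = cs / cinf" "\<forall>x\<in>{0..l}. c x = cstar a D g lc cinf l x" using sol[OF S] by auto
  show "strict_antimono_on {0..l} c"
  proof (rule sao)
    fix x y assume xy: "x \<in> {0..l}" "y \<in> {0..l}" "x < y"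
    have "cstar a D g lc cinf l y < cstar a D g lc cinf l x"
      unfolding Cv using inc2[OF assms(1), of "l - y" "l - x"] xy by simp
    then show "c y < c x" using sol(3)[OF S] xy by simp
  qed
qed

end

end

theorem theorem1:
  fixes a D g lc cinf cs :: real
  assumes "a > 0" and "D > 0" and "g > 0" and "lc > 0" and "cinf > 0" and "cs \<ge> 0"
  shows
   "(g * lc < a \<longrightarrow>
      (let z = z0 a D g lc; S = steady_state a D g lc cinf cs;
           C = cstar a D g lc cinf; f = ff a D g lc in
       z > 0 \<and>
       (cs / cinf < f z \<and> f z < 1 \<longrightarrow> \<not> (\<exists>l c. S l c)) \<and>
       (cs / cinf = f z \<longrightarrow>
          S z (C z) \<and>
          (\<forall>l c. S l c \<longrightarrow> l = z \<and> (\<forall>x\<in>{0..l}. c x = C z x)) \<and>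
          strict_mono_on {0..z} (C z)) \<and>
       (f z < cs / cinf \<and> cs / cinf < 1 \<longrightarrow>
          (\<exists>l1 l2. 0 < l1 \<and> l1 < z \<and> z < l2 \<and>
             S l1 (C l1) \<and> S l2 (C l2) \<and>
             (\<forall>l c. S l c \<longrightarrow> (l = l1 \<or> l = l2) \<and> (\<forall>x\<in>{0..l}. c x = C l x)) \<and>
             strict_mono_on {0..l1} (C l1) \<and>
             strict_antimono_on {0..l2 - z} (C l2) \<and>
             strict_mono_on {l2 - z..l2} (C l2))) \<and>
       (cs / cinf \<ge> 1 \<longrightarrow>
          (\<exists>l. z < l \<and> S l (C l) \<and>
             (\<forall>l' c. S l' c \<longrightarrow> l' = l \<and> (\<forall>x\<in>{0..l'}. c x = C l x)) \<and>
             strict_antimono_on {0<..l - z} (C l) \<and>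
             strict_mono_on {l - z..l} (C l))))) \<and>
    (g * lc \<ge> a \<longrightarrow>
      (let S = steady_state a D g lc cinf cs;
           C = cstar a D g lc cinf; f = ff a D g lc in
       ((\<exists>l c. S l c) \<longleftrightarrow> cs > cinf) \<and>
       (cs > cinf \<longrightarrow>
          (\<exists>!l. l > 0 \<and> f l = cs / cinf) \<and>
          (\<forall>l. l > 0 \<and> f l = cs / cinf \<longrightarrow> S l (C l)) \<and>
          (\<forall>l c. S l c \<longrightarrow> l > 0 \<and> f l = cs / cinf \<and> (\<forall>x\<in>{0..l}. c x = C l x) \<and>
                            strict_antimono_on {0..l} c))))"
proof -
  interpret ax a D g lc using assms by unfold_locales
  have c: "cinf > 0" "cs \<ge> 0" using assms by auto
  show ?thesis
    unfolding Let_def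
    apply (rule conjI; rule impI)
    subgoal
      apply (intro conjI)
      subgoal by (erule z0_pos)
      subgoal using I1[OF c] by blast
      subgoal using I2[OF c] by blast
      subgoal using I3[OF c] by blast
      subgoal using I4[OF c] by blast
      done
    subgoal
      apply (intro conjI)
      subgoal using II1[OF c] by blast
      subgoal using II2[OF c] by blast
      done
    done
qed



end
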